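(* Let $\mathcal{Z}=\langle c,G\rangle\subset\mathbb{R}^n$ be a zonotope, fix a reduction order for Girard reduction $\operatorname{GR}$, and let $P\in\mathbb{R}^{n\times n}$ be orthogonal. Then: (1) (Containment) $\mathcal{Z}\subseteq P\cdot\operatorname{GR}(P^\top\mathcal{Z})$. (2) (Volume bound) Let $G_{\mathrm{disc}}\in\mathbb{R}^{n\times m}$ be the submatrix of generators discarded by the reduction, $S=G_{\mathrm{disc}}G_{\mathrm{disc}}^\top$, and for orthogonal $P$ let $d(P)=|P^\top G_{\mathrm{disc}}|\mathbf{1}_m\in\mathbb{R}^n$ (entrywise absolute value), i.e. $d_i(P)=\|e_i^\top P^\top G_{\mathrm{disc}}\|_1$, and $\mathcal{B}(d(P))=\{x:|x_i|\le d_i(P)\ \forall i\}$ the corresponding axis-aligned box (the interval-hull term injected by Girard reduction in the rotated coordinates). Then $$\mathrm{vol}(\mathcal{B}(d(P)))=2^n\prod_{i=1}^n d_i(P)\le(2\sqrt m)^n\sqrt{\prod_{i=1}^n(P^\top SP)_{ii}},$$ and the right-hand side is minimized over all orthogonal $P$ by any PCA basis of $G_{\mathrm{disc}}$, i.e. any orthogonal $P$ for which $P^\top SP$ is diagonal.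
   Context: A zonotope is $\langle c,G\rangle=\{c+G\xi:\xi\in[-1,1]^p\}$ with $c\in\mathbb{R}^n$, $G\in\mathbb{R}^{n\times p}$; for a matrix $Q$, $Q\langle c,G\rangle=\langle Qc,QG\rangle$. Girard order reduction $\operatorname{GR}$ with target order $\rho$: given $\langle c,G\rangle$, keep the $\rho n-n$ columns of $G$ with largest Euclidean norm (index set $\mathcal{I}_{\mathrm{keep}}$), and replace the remaining (discarded) columns $\mathcal{I}_{\mathrm{disc}}$ by their axis-aligned interval hull with half-widths $d_i=\sum_{j\in\mathcal{I}_{\mathrm{disc}}}|G_{ij}|$; the result is $\operatorname{GR}(\langle c,G\rangle)=\langle c,[G_{:,\mathcal{I}_{\mathrm{keep}}},\mathrm{diag}(d)]\rangle$. It satisfies $\mathcal{Z}\subseteq\operatorname{GR}(\mathcal{Z})$. $\mathrm{vol}$ is Lebesgue volume, $\mathbf{1}_m$ the all-ones vector, $e_i$ the $i$-th standard basis vector. *)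

theory Defs
  imports "HOL-Analysis.Analysis"
begin

definition zonotope :: "real^'n \<Rightarrow> ('i \<Rightarrow> real^'n) \<Rightarrow> 'i set \<Rightarrow> (real^'n) set" where
  "zonotope c g I = {c + (\<Sum>j\<in>I. xi j *\<^sub>R g j) | xi. \<forall>j\<in>I. \<bar>xi j\<bar> \<le> 1}"

definition girard_keep :: "nat \<Rightarrow> (nat \<Rightarrow> real^'n) \<Rightarrow> nat \<Rightarrow> nat set \<Rightarrow> bool" where
  "girard_keep rho g p K \<longleftrightarrow>
     K \<subseteq> {..<p} \<and> card K = min p (rho * CARD('n) - CARD('n)) \<and>
     (\<forall>i\<in>K. \<forall>j\<in>{..<p} - K. norm (g j) \<le> norm (g i))"

definition girard_d :: "(nat \<Rightarrow> real^'n) \<Rightarrow> nat \<Rightarrow> nat set \<Rightarrow> real^'n" where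
  "girard_d g p K = (\<chi> i. \<Sum>j\<in>{..<p} - K. \<bar>g j $ i\<bar>)"

definition girard_gens :: "(nat \<Rightarrow> real^'n) \<Rightarrow> nat \<Rightarrow> nat set \<Rightarrow> nat + 'n \<Rightarrow> real^'n" where
  "girard_gens g p K k = (case k of Inl j \<Rightarrow> g j | Inr i \<Rightarrow> (girard_d g p K $ i) *\<^sub>R axis i 1)"

definition girard_red :: "real^'n \<Rightarrow> (nat \<Rightarrow> real^'n) \<Rightarrow> nat \<Rightarrow> nat set \<Rightarrow> (real^'n) set" where
  "girard_red c g p K = zonotope c (girard_gens g p K) (Inl ` K \<union> Inr ` UNIV)"

definition box_hw :: "real^'n \<Rightarrow> (real^'n) set" where
  "box_hw d = {x. \<forall>i. \<bar>x $ i\<bar> \<le> d $ i}"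

end

theory Submission
  imports Defs
begin

lemma box_eq:
  fixes d :: "real^'n"
  shows "box_hw d = cbox (-d) d"
  by (intro set_eqI) (simp add: box_hw_def mem_box_cart abs_le_iff minus_le_iff conj_commute)

lemma amgm_orth:
  fixes R :: "real^'n^'n" and l :: "'n \<Rightarrow> real"
  assumes R: "orthogonal_matrix R" and l: "\<And>k. l k \<ge> 0"
  shows "(\<Prod>k\<in>UNIV. l k) \<le> (\<Prod>i\<in>UNIV. \<Sum>k\<in>UNIV. (R$k$i)^2 * l k)"
proof (cases "\<exists>k. l k = 0")
  case True
  then have "(\<Prod>k\<in>UNIV. l k) = 0" by auto
  moreover have "0 \<le> (\<Prod>i\<in>UNIV. \<Sum>k\<in>UNIV. (R$k$i)^2 * l k)"
    using l by (intro prod_nonneg sum_nonneg) auto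
  ultimately show ?thesis by linarith
next
  case False
  then have lp: "\<And>k. l k > 0" using l by (metis less_eq_real_def)
  have c1: "(\<Sum>k\<in>UNIV. (R$k$i)^2) = 1" for i
  proof -
    have "(transpose R ** R) $ i $ i = 1" using R by (simp add: orthogonal_matrix mat_def)
    then show ?thesis by (simp add: matrix_matrix_mult_def transpose_def power2_eq_square)
  qed
  have c2: "(\<Sum>i\<in>UNIV. (R$k$i)^2) = 1" for k
  proof -
    have "(R ** transpose R) $ k $ k = 1" using R by (simp add: orthogonal_matrix_def mat_def)
    then show ?thesis by (simp add: matrix_matrix_mult_def transpose_def power2_eq_square)
  qed
  have pos: "(\<Sum>k\<in>UNIV. (R$k$i)^2 * l k) > 0" for i
  proof -
    obtain k where "R$k$i \<noteq> 0" using c1[of i] by (metis (mono_tags, lifting) power_zero_numeral sum.neutral zero_neq_one)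
    then have "(R$k$i)^2 * l k > 0" using lp[of k] by simp
    moreover have "(R$k$i)^2 * l k \<le> (\<Sum>k\<in>UNIV. (R$k$i)^2 * l k)"
      by (rule member_le_sum) (use l in auto)
    ultimately show ?thesis by linarith
  qed
  have jen: "(\<Sum>k\<in>UNIV. (R$k$i)^2 * ln (l k)) \<le> ln (\<Sum>k\<in>UNIV. (R$k$i)^2 * l k)" for i
    using concave_on_sum[OF finite UNIV_not_empty ln_concave, of "\<lambda>k. (R$k$i)^2" l] c1 lp
    by auto
  have "ln (\<Prod>k\<in>UNIV. l k) = (\<Sum>k\<in>UNIV. ln (l k))" by (rule ln_prod[OF finite]) (metis lp less_irrefl)
  also have "\<dots> = (\<Sum>k\<in>UNIV. (\<Sum>i\<in>UNIV. (R$k$i)^2) * ln (l k))" by (simp add: c2)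
  also have "\<dots> = (\<Sum>i\<in>UNIV. \<Sum>k\<in>UNIV. (R$k$i)^2 * ln (l k))"
    using sum.swap by (simp add: sum_distrib_right) (rule sum.swap)
  also have "\<dots> \<le> (\<Sum>i\<in>UNIV. ln (\<Sum>k\<in>UNIV. (R$k$i)^2 * l k))"
    by (rule sum_mono) (rule jen)
  also have "\<dots> = ln (\<Prod>i\<in>UNIV. \<Sum>k\<in>UNIV. (R$k$i)^2 * l k)" by (rule ln_prod[OF finite, symmetric]) (metis pos less_irrefl)
  finally show ?thesis using lp pos by (simp add: prod_pos)
qed

lemma entry_formula:
  fixes Q :: "real^'n^'n" and g :: "nat \<Rightarrow> real^'n"
  shows "(transpose Q ** ((\<chi> a b. \<Sum>j\<in>D. g j $ a * g j $ b) :: real^'n^'n) ** Q) $ a $ b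
       = (\<Sum>j\<in>D. (transpose Q *v g j) $ a * (transpose Q *v g j) $ b)"
  by (simp add: matrix_matrix_mult_def matrix_vector_mult_def transpose_def
      sum_distrib_left sum_distrib_right sum_product mult_ac sum.swap[of _ D])

lemma box_meas:
  fixes d :: "real^'n"
  assumes "\<And>i. d $ i \<ge> 0"
  shows "measure lebesgue (box_hw d) = 2 ^ CARD('n) * (\<Prod>i\<in>UNIV. d $ i)"
proof -
  have ne: "cbox (-d) d \<noteq> {}" unfolding interval_eq_empty_cart using assms by (metis neg_le_0_iff_le order_trans not_le vector_uminus_component)
  have "measure lebesgue (cbox (-d) d) = measure lborel (cbox (-d) d)"
    by (simp add: measure_completion)
  also have "\<dots> = (\<Prod>i\<in>UNIV. 2 * d $ i)" using ne by (simp add: content_cbox_cart)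
  also have "\<dots> = 2 ^ CARD('n) * (\<Prod>i\<in>UNIV. d $ i)" by (simp add: prod.distrib)
  finally show ?thesis by (simp add: box_eq)
qed

lemma sqrt_prod: "finite A \<Longrightarrow> sqrt (prod f A) = (\<Prod>i\<in>A. sqrt (f i))"
  by (induct A rule: finite_induct) (auto simp: real_sqrt_mult)

lemma cs_bound:
  fixes h :: "nat \<Rightarrow> real"
  shows "(\<Sum>j\<in>D. \<bar>h j\<bar>) \<le> sqrt (real (card D)) * sqrt (\<Sum>j\<in>D. h j * h j)"
proof -
  have "(\<Sum>j\<in>D. \<bar>h j\<bar>)\<^sup>2 \<le> (\<Sum>j\<in>D. \<bar>h j\<bar>\<^sup>2) * card D"
    by (rule sum_squared_le_sum_of_squares)
  also have "\<dots> = real (card D) * (\<Sum>j\<in>D. h j * h j)" by (simp add: power2_eq_square)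
  finally have "sqrt ((\<Sum>j\<in>D. \<bar>h j\<bar>)\<^sup>2) \<le> sqrt (real (card D) * (\<Sum>j\<in>D. h j * h j))"
    by (rule real_sqrt_le_mono)
  then show ?thesis by (simp add: real_sqrt_mult sum_nonneg)
qed

lemma contain:
  fixes c :: "real^'n" and g :: "nat \<Rightarrow> real^'n" and P :: "real^'n^'n"
  assumes orthP: "orthogonal_matrix P" and KS: "K \<subseteq> {..<p}"
  shows "zonotope c g {..<p} \<subseteq>
         (\<lambda>x. P *v x) ` girard_red (transpose P *v c) (\<lambda>j. transpose P *v g j) p K"
proof
  fix x assume "x \<in> zonotope c g {..<p}"
  then obtain xi where x: "x = c + (\<Sum>j\<in>{..<p}. xi j *\<^sub>R g j)" and xi: "\<forall>j\<in>{..<p}. \<bar>xi j\<bar> \<le> 1"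
    unfolding zonotope_def by blast
  define h where "h j = transpose P *v g j" for j
  define dd where "dd = girard_d h p K"
  define v where "v = (\<Sum>j\<in>{..<p} - K. xi j *\<^sub>R h j)"
  define y where "y = transpose P *v x"
  have finK: "finite K" using KS finite_subset by blast
  have Px: "P *v y = x" unfolding y_def using orthP
    by (metis matrix_vector_mul_assoc matrix_vector_mul_lid orthogonal_matrix_def)
  have lin: "linear (\<lambda>z. transpose P *v (z::real^'n))" by (rule matrix_vector_mul_linear)
  have y: "y = transpose P *v c + (\<Sum>j\<in>{..<p}. xi j *\<^sub>R h j)"
    unfolding y_def x h_def by (simp add: linear_add[OF lin] linear_sum[OF lin] linear_scale[OF lin] del: transpose_matrix_vector)
  have split: "(\<Sum>j\<in>{..<p}. xi j *\<^sub>R h j) = (\<Sum>j\<in>K. xi j *\<^sub>R h j) + v"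
    unfolding v_def by (subst sum.subset_diff[OF KS finite_lessThan]) (rule add.commute)
  have vb: "\<bar>v $ i\<bar> \<le> dd $ i" for i
  proof -
    have "\<bar>v $ i\<bar> = \<bar>\<Sum>j\<in>{..<p} - K. xi j * h j $ i\<bar>" by (simp add: v_def)
    also have "\<dots> \<le> (\<Sum>j\<in>{..<p} - K. \<bar>xi j * h j $ i\<bar>)" by (rule sum_abs)
    also have "\<dots> \<le> (\<Sum>j\<in>{..<p} - K. \<bar>h j $ i\<bar>)"
    proof (rule sum_mono)
      fix j assume "j \<in> {..<p} - K"
      then have "\<bar>xi j\<bar> \<le> 1" using xi by auto
      then show "\<bar>xi j * h j $ i\<bar> \<le> \<bar>h j $ i\<bar>"
        by (simp add: abs_mult mult_left_le_one_le)
    qed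
    finally show ?thesis by (simp add: dd_def girard_d_def)
  qed
  define eta where "eta i = (if dd $ i = 0 then 0 else v $ i / dd $ i)" for i
  define xi' where "xi' k = (case k of Inl j \<Rightarrow> xi j | Inr i \<Rightarrow> eta i)" for k
  have eta1: "\<bar>eta i\<bar> \<le> 1" for i
  proof (cases "dd $ i = 0")
    case True then show ?thesis by (simp add: eta_def)
  next
    case False
    with vb[of i] have dp: "dd $ i > 0" by (smt (verit) abs_ge_zero)
    have "\<bar>v $ i / dd $ i\<bar> = \<bar>v $ i\<bar> / dd $ i" using dp by (simp add: abs_divide)
    also have "\<dots> \<le> 1" using dp vb[of i] by simp
    finally show ?thesis using False by (simp add: eta_def)
  qed
  have etav: "eta i * dd $ i = v $ i" for i
    using vb[of i] by (auto simp: eta_def)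
  have vsum: "(\<Sum>i\<in>UNIV. (eta i * dd $ i) *\<^sub>R (axis i 1 :: real^'n)) = v"
  proof (subst vec_eq_iff, intro allI)
    fix k
    have "(\<Sum>i\<in>UNIV. (eta i * dd $ i) *\<^sub>R (axis i 1 :: real^'n)) $ k
        = (\<Sum>i\<in>UNIV. (if i = k then eta i * dd $ i else 0))"
      by (simp only: sum_component) (intro sum.cong, auto simp: axis_def)
    also have "\<dots> = v $ k" by (simp add: etav)
    finally show "(\<Sum>i\<in>UNIV. (eta i * dd $ i) *\<^sub>R (axis i 1 :: real^'n)) $ k = v $ k" .
  qed
  have "(\<Sum>k\<in>Inl ` K \<union> Inr ` UNIV. xi' k *\<^sub>R girard_gens h p K k)
      = (\<Sum>k\<in>Inl ` K. xi' k *\<^sub>R girard_gens h p K k) + (\<Sum>k\<in>Inr ` UNIV. xi' k *\<^sub>R girard_gens h p K k)"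
    by (rule sum.union_disjoint) (use finK in auto)
  also have "\<dots> = (\<Sum>j\<in>K. xi j *\<^sub>R h j) + (\<Sum>i\<in>UNIV. (eta i * dd $ i) *\<^sub>R (axis i 1 :: real^'n))"
  proof -
    have "(\<Sum>k\<in>Inl ` K. xi' k *\<^sub>R girard_gens h p K k) = (\<Sum>j\<in>K. xi j *\<^sub>R h j)"
      by (subst sum.reindex) (auto simp: inj_on_def xi'_def girard_gens_def)
    moreover have "(\<Sum>k\<in>Inr ` UNIV. xi' k *\<^sub>R girard_gens h p K k)
        = (\<Sum>i\<in>UNIV. (eta i * dd $ i) *\<^sub>R (axis i 1 :: real^'n))"
      by (subst sum.reindex) (auto simp: inj_on_def xi'_def girard_gens_def dd_def)
    ultimately show ?thesis by simp
  qed
  also have "\<dots> = (\<Sum>j\<in>{..<p}. xi j *\<^sub>R h j)" using split vsum by simp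
  finally have "y \<in> girard_red (transpose P *v c) h p K"
    unfolding girard_red_def zonotope_def y
    apply (intro CollectI exI[of _ xi'] conjI)
     apply simp
    using xi KS eta1 unfolding xi'_def by auto
  then show "x \<in> (\<lambda>x. P *v x) ` girard_red (transpose P *v c) (\<lambda>j. transpose P *v g j) p K"
    using Px unfolding h_def by (metis image_eqI)
qed

theorem lemma3p3:
  fixes c :: "real^'n" and g :: "nat \<Rightarrow> real^'n" and p :: nat and rho :: nat
    and P :: "real^'n^'n"
  assumes orthP: "orthogonal_matrix P"
  shows
    "(\<forall>K. girard_keep rho (\<lambda>j. transpose P *v g j) p K \<longrightarrow>
         zonotope c g {..<p} \<subseteq>
         (\<lambda>x. P *v x) ` girard_red (transpose P *v c) (\<lambda>j. transpose P *v g j) p K)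
     \<and>
     (\<forall>K. girard_keep rho g p K \<longrightarrow>
       (let D = {..<p} - K; m = card D;
            S = (\<chi> a b. \<Sum>j\<in>D. g j $ a * g j $ b) :: real^'n^'n;
            d = (\<lambda>Q::real^'n^'n. (\<chi> i. \<Sum>j\<in>D. \<bar>(transpose Q *v g j) $ i\<bar>) :: real^'n);
            rhs = (\<lambda>Q::real^'n^'n. (2 * sqrt (real m)) ^ CARD('n) *
                     sqrt (\<Prod>i\<in>UNIV. (transpose Q ** S ** Q) $ i $ i))
        in measure lebesgue (box_hw (d P)) = 2 ^ CARD('n) * (\<Prod>i\<in>UNIV. d P $ i)
           \<and> 2 ^ CARD('n) * (\<Prod>i\<in>UNIV. d P $ i) \<le> rhs P
           \<and> (\<forall>Q. orthogonal_matrix Q \<and>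
                  (\<forall>i k. i \<noteq> k \<longrightarrow> (transpose Q ** S ** Q) $ i $ k = 0)
                  \<longrightarrow> rhs Q \<le> rhs P)))"
proof -
  have part1: "\<forall>K. girard_keep rho (\<lambda>j. transpose P *v g j) p K \<longrightarrow>
         zonotope c g {..<p} \<subseteq>
         (\<lambda>x. P *v x) ` girard_red (transpose P *v c) (\<lambda>j. transpose P *v g j) p K"
    using contain[OF orthP] unfolding girard_keep_def by blast
  have part2: "girard_keep rho g p K \<longrightarrow>
       (let D = {..<p} - K; m = card D;
            S = (\<chi> a b. \<Sum>j\<in>D. g j $ a * g j $ b) :: real^'n^'n;
            d = (\<lambda>Q::real^'n^'n. (\<chi> i. \<Sum>j\<in>D. \<bar>(transpose Q *v g j) $ i\<bar>) :: real^'n);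
            rhs = (\<lambda>Q::real^'n^'n. (2 * sqrt (real m)) ^ CARD('n) *
                     sqrt (\<Prod>i\<in>UNIV. (transpose Q ** S ** Q) $ i $ i))
        in measure lebesgue (box_hw (d P)) = 2 ^ CARD('n) * (\<Prod>i\<in>UNIV. d P $ i)
           \<and> 2 ^ CARD('n) * (\<Prod>i\<in>UNIV. d P $ i) \<le> rhs P
           \<and> (\<forall>Q. orthogonal_matrix Q \<and>
                  (\<forall>i k. i \<noteq> k \<longrightarrow> (transpose Q ** S ** Q) $ i $ k = 0)
                  \<longrightarrow> rhs Q \<le> rhs P))" for K
  proof
    define D where "D = {..<p} - K"
    define S where "S = ((\<chi> a b. \<Sum>j\<in>D. g j $ a * g j $ b) :: real^'n^'n)"
    define d where "d = (\<lambda>Q::real^'n^'n. ((\<chi> i. \<Sum>j\<in>D. \<bar>(transpose Q *v g j) $ i\<bar>) :: real^'n))"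
    define rhs where "rhs = (\<lambda>Q::real^'n^'n. (2 * sqrt (real (card D))) ^ CARD('n) *
                     sqrt (\<Prod>i\<in>UNIV. (transpose Q ** S ** Q) $ i $ i))"
    have T: "(transpose Q ** S ** Q) $ a $ b = (\<Sum>j\<in>D. (transpose Q *v g j) $ a * (transpose Q *v g j) $ b)"
      for Q :: "real^'n^'n" and a b
      unfolding S_def by (rule entry_formula)
    have Tnn: "(transpose Q ** S ** Q) $ i $ i \<ge> 0" for Q :: "real^'n^'n" and i
      unfolding T by (rule sum_nonneg) simp
    have dnn: "d Q $ i \<ge> 0" for Q i unfolding d_def by (simp add: sum_nonneg)
    have A: "measure lebesgue (box_hw (d P)) = 2 ^ CARD('n) * (\<Prod>i\<in>UNIV. d P $ i)"
      by (rule box_meas) (rule dnn)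
    have B: "2 ^ CARD('n) * (\<Prod>i\<in>UNIV. d P $ i) \<le> rhs P"
    proof -
      have "d P $ i \<le> sqrt (real (card D)) * sqrt ((transpose P ** S ** P) $ i $ i)" for i
        unfolding d_def T by (simp del: transpose_matrix_vector) (rule cs_bound)
      then have "(\<Prod>i\<in>UNIV. d P $ i) \<le> (\<Prod>i\<in>UNIV. sqrt (real (card D)) * sqrt ((transpose P ** S ** P) $ i $ i))"
        by (intro prod_mono) (simp add: dnn)
      also have "\<dots> = sqrt (real (card D)) ^ CARD('n) * sqrt (\<Prod>i\<in>UNIV. (transpose P ** S ** P) $ i $ i)"
        by (simp add: prod.distrib sqrt_prod)
      finally have "2 ^ CARD('n) * (\<Prod>i\<in>UNIV. d P $ i) \<le>
          2 ^ CARD('n) * (sqrt (real (card D)) ^ CARD('n) * sqrt (\<Prod>i\<in>UNIV. (transpose P ** S ** P) $ i $ i))"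
        by simp
      then show ?thesis by (simp add: rhs_def power_mult_distrib mult.assoc)
    qed
    have C: "\<forall>Q. orthogonal_matrix Q \<and>
                  (\<forall>i k. i \<noteq> k \<longrightarrow> (transpose Q ** S ** Q) $ i $ k = 0)
                  \<longrightarrow> rhs Q \<le> rhs P"
    proof (intro allI impI, elim conjE)
      fix Q :: "real^'n^'n"
      assume oQ: "orthogonal_matrix Q" and dg: "\<forall>i k. i \<noteq> k \<longrightarrow> (transpose Q ** S ** Q) $ i $ k = 0"
      define L where "L = transpose Q ** S ** Q"
      define R where "R = transpose Q ** P"
      have QQ: "Q ** transpose Q = mat 1" using oQ by (simp add: orthogonal_matrix_def)
      have oR: "orthogonal_matrix R" unfolding R_def
        by (intro orthogonal_matrix_mul orthP) (simp add: oQ)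
      have "transpose R ** L ** R = transpose P ** (Q ** transpose Q) ** S ** (Q ** transpose Q) ** P"
        by (simp add: R_def L_def matrix_transpose_mul matrix_mul_assoc)
      then have eq: "transpose P ** S ** P = transpose R ** L ** R" by (simp add: QQ)
      have Lkl: "L $ k $ l = (if k = l then L $ l $ l else 0)" for k l
        using dg unfolding L_def by auto
      have inner: "(\<Sum>k\<in>UNIV. R $ k $ i * L $ k $ l) = R $ l $ i * L $ l $ l" for i l
      proof -
        have "(\<Sum>k\<in>UNIV. R $ k $ i * L $ k $ l) = (\<Sum>k\<in>UNIV. if k = l then R $ l $ i * L $ l $ l else 0)"
          by (intro sum.cong refl) (subst Lkl, simp)
        also have "\<dots> = R $ l $ i * L $ l $ l" by simp
        finally show ?thesis .
      qed
      have ent: "(transpose P ** S ** P) $ i $ i = (\<Sum>k\<in>UNIV. (R $ k $ i)^2 * L $ k $ k)" for i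
      proof -
        have i2: "(transpose R ** L) $ i $ l = R $ l $ i * L $ l $ l" for l
          unfolding matrix_matrix_mult_def transpose_def by (simp only: vec_lambda_beta inner)
        have "(transpose R ** L ** R) $ i $ i = (\<Sum>l\<in>UNIV. (transpose R ** L) $ i $ l * R $ l $ i)"
          unfolding matrix_matrix_mult_def[of "transpose R ** L" R] by (simp only: vec_lambda_beta)
        also have "\<dots> = (\<Sum>k\<in>UNIV. (R $ k $ i)^2 * L $ k $ k)"
          by (simp only: i2) (simp add: power2_eq_square mult_ac)
        finally show ?thesis unfolding eq .
      qed
      have Lnn: "L $ k $ k \<ge> 0" for k unfolding L_def by (rule Tnn)
      have "(\<Prod>k\<in>UNIV. L $ k $ k) \<le> (\<Prod>i\<in>UNIV. (transpose P ** S ** P) $ i $ i)"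
        unfolding ent by (rule amgm_orth[OF oR]) (rule Lnn)
      then have "sqrt (\<Prod>k\<in>UNIV. L $ k $ k) \<le> sqrt (\<Prod>i\<in>UNIV. (transpose P ** S ** P) $ i $ i)"
        by (rule real_sqrt_le_mono)
      then show "rhs Q \<le> rhs P" unfolding rhs_def L_def
        by (intro mult_left_mono) simp_all
    qed
    show "(let D = {..<p} - K; m = card D;
            S = (\<chi> a b. \<Sum>j\<in>D. g j $ a * g j $ b) :: real^'n^'n;
            d = (\<lambda>Q::real^'n^'n. (\<chi> i. \<Sum>j\<in>D. \<bar>(transpose Q *v g j) $ i\<bar>) :: real^'n);
            rhs = (\<lambda>Q::real^'n^'n. (2 * sqrt (real m)) ^ CARD('n) *
                     sqrt (\<Prod>i\<in>UNIV. (transpose Q ** S ** Q) $ i $ i))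
        in measure lebesgue (box_hw (d P)) = 2 ^ CARD('n) * (\<Prod>i\<in>UNIV. d P $ i)
           \<and> 2 ^ CARD('n) * (\<Prod>i\<in>UNIV. d P $ i) \<le> rhs P
           \<and> (\<forall>Q. orthogonal_matrix Q \<and>
                  (\<forall>i k. i \<noteq> k \<longrightarrow> (transpose Q ** S ** Q) $ i $ k = 0)
                  \<longrightarrow> rhs Q \<le> rhs P))"
      using A B C unfolding Let_def D_def S_def d_def rhs_def by blast
  qed
  show ?thesis using part1 part2 by blast
qed

end
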